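(* Let $\Sigma$ be a $d\times d$ positive definite matrix and let $R_1,R_2$ be $d\times d$ matrices with $R_1R_1^T=R_2R_2^T=\Sigma$ (two generation matrices of a Brownian motion with covariance $\Sigma$). Let $f:\mathbb{R}^d\to\mathbb{R}$ be such that $g_1(\bm z)=f(R_1\bm z)$ and $g_2(\bm z)=f(R_2\bm z)$ are differentiable almost everywhere with finite gradient information matrices. Then $g_1$ and $g_2$ have the same active subspaces, and their analytic expressions in the $d$-dimensional active subspace coincide: $g_1^{\mathrm A}(\bm z)=g_2^{\mathrm A}(\bm z)$.
   Context: For an a.e. differentiable $g:\mathbb{R}^d\to\mathbb{R}$ and $\bm{Z}\sim N(\bm 0,I_d)$, the gradient information matrix is $C=\mathbb{E}\big(\nabla g(\bm{Z})\nabla g(\bm{Z})^T\big)=Q\Lambda Q^T$ (eigendecomposition, $Q$ orthogonal, eigenvalues in descending order); the $r$-dimensional active subspace is spanned by the first $r$ columns of $Q$, and $g^{\mathrm A}(\bm z):=g(Q\bm z)$. Since $g_2(\bm z)=g_1(U\bm z)$ for the orthogonal matrix $U=R_1^{-1}R_2$, "the same active subspaces" means: identifying coordinates $\bm x$ of $g_1$ and $\bm y=U^T\bm x$ of $g_2$ as coordinates of the same vector in bases $(\bm\alpha_i)$ and $(\bm\beta_i)=(\bm\alpha_i)U$ of a common inner product space, the $r$-dimensional active subspaces coincide for every $r$, with eigenvector matrices chosen correspondingly ($Q_2=U^TQ_1$) when eigenvalues are repeated. *)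

theory Defs
  imports "HOL-Probability.Probability"
begin

definition std_gaussian :: "(real^'n) measure" where
  "std_gaussian = density lborel (\<lambda>z. ennreal (\<Prod>i\<in>UNIV. std_normal_density (z $ i)))"

text \<open>Gradient of g at z (meaningful where g is differentiable at z).\<close>
definition gradient :: "(real^'n \<Rightarrow> real) \<Rightarrow> real^'n \<Rightarrow> real^'n" where
  "gradient g z = (SOME v. (g has_derivative (\<lambda>h. v \<bullet> h)) (at z))"

definition grad_info_finite :: "(real^'n \<Rightarrow> real) \<Rightarrow> bool" where
  "grad_info_finite g \<longleftrightarrow>
     (AE z in std_gaussian. g differentiable (at z)) \<and>
     (\<forall>i j. integrable std_gaussian (\<lambda>z. gradient g z $ i * gradient g z $ j))"

definition grad_info :: "(real^'n \<Rightarrow> real) \<Rightarrow> real^'n^'n" where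
  "grad_info g = (\<chi> i j. integral\<^sup>L std_gaussian (\<lambda>z. gradient g z $ i * gradient g z $ j))"

definition diag_mat :: "real^'n \<Rightarrow> real^'n^'n" where
  "diag_mat lam = (\<chi> i j. if i = j then lam $ i else 0)"

definition pos_def :: "real^'n^'n \<Rightarrow> bool" where
  "pos_def S \<longleftrightarrow> transpose S = S \<and> (\<forall>x. x \<noteq> 0 \<longrightarrow> x \<bullet> (S *v x) > 0)"

definition eig_decomp_desc :: "real^('n::{finite,linorder})^('n::{finite,linorder}) \<Rightarrow> real^('n::{finite,linorder})^('n::{finite,linorder}) \<Rightarrow> real^('n::{finite,linorder}) \<Rightarrow> bool" where
  "eig_decomp_desc C Q lam \<longleftrightarrow>
     orthogonal_matrix Q \<and> C = Q ** diag_mat lam ** transpose Q \<and>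
     (\<forall>i j. i \<le> j \<longrightarrow> lam $ j \<le> lam $ i)"

text \<open>r-dimensional active subspace: span of the first r columns of Q.\<close>
definition active_subspace :: "real^('n::{finite,linorder})^('n::{finite,linorder}) \<Rightarrow> nat \<Rightarrow> (real^('n::{finite,linorder})) set" where
  "active_subspace Q r = span {column i Q | i. card {j. j < i} < r}"

definition active_fun :: "(real^'n \<Rightarrow> real) \<Rightarrow> real^'n^'n \<Rightarrow> real^'n \<Rightarrow> real" where
  "active_fun g Q z = g (Q *v z)"

end

theory Submission
  imports Defs
begin

declare transpose_matrix_vector [simp del]

lemma orth_tr: "orthogonal_matrix (U::real^'m^'m) \<Longrightarrow> orthogonal_transformation (\<lambda>x. U *v x)"
  by (simp add: orthogonal_transformation_matrix)

lemma lborel_orth_wo: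
  fixes U :: "real^('m::{finite,wellorder})^('m::{finite,wellorder})"
  assumes U: "orthogonal_matrix U"
  shows "distr lborel borel (\<lambda>x. U *v x) = lborel"
proof (rule lborel_eqI[symmetric])
  fix l u :: "real^('m::{finite,wellorder})"
  assume le: "\<And>b. b \<in> Basis \<Longrightarrow> l \<bullet> b \<le> u \<bullet> b"
  have UT: "U ** transpose U = mat 1" "transpose U ** U = mat 1" using U by (auto simp: orthogonal_matrix_def)
  have pre: "(\<lambda>x. U *v x) -` box l u = (\<lambda>x. transpose U *v x) ` box l u"
  proof -
    have "y \<in> (\<lambda>x. U *v x) -` box l u \<longleftrightarrow> y \<in> (\<lambda>x. transpose U *v x) ` box l u" for y
    proof
      assume "y \<in> (\<lambda>x. U *v x) -` box l u"
      then show "y \<in> (\<lambda>x. transpose U *v x) ` box l u"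
        by (intro image_eqI[of _ _ "U *v y"]) (simp_all add: matrix_vector_mul_assoc UT del: transpose_matrix_vector)
    next
      assume "y \<in> (\<lambda>x. transpose U *v x) ` box l u"
      then show "y \<in> (\<lambda>x. U *v x) -` box l u"
        by (auto simp: matrix_vector_mul_assoc UT simp del: transpose_matrix_vector)
    qed
    then show ?thesis by blast
  qed
  have ot: "orthogonal_transformation (\<lambda>x. transpose U *v x)" using U by (simp add: orth_tr)
  have bl: "box l u \<in> lmeasurable" by simp
  have m1: "(\<lambda>x. transpose U *v x) ` box l u \<in> lmeasurable"
    by (rule measurable_orthogonal_image[OF ot bl])
  have m2: "measure lebesgue ((\<lambda>x. transpose U *v x) ` box l u) = measure lebesgue (box l u)"
    by (rule measure_orthogonal_image[OF ot bl])
  have op: "open ((\<lambda>x. transpose U *v x) ` box l u)"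
    using ot by (metis open_box orthogonal_transformation_bij bij_is_inj orthogonal_transformation_linear
        open_surjective_linear_image orthogonal_transformation_surj)
  then have bor: "(\<lambda>x. transpose U *v x) ` box l u \<in> sets borel" by simp
  have "emeasure lborel ((\<lambda>x. transpose U *v x) ` box l u) = emeasure lebesgue ((\<lambda>x. transpose U *v x) ` box l u)"
    using bor by simp
  also have "\<dots> = ennreal (measure lebesgue ((\<lambda>x. transpose U *v x) ` box l u))"
    using m1 by (simp add: emeasure_eq_measure2)
  also have "\<dots> = ennreal (measure lebesgue (box l u))" using m2 by simp
  also have "\<dots> = emeasure lebesgue (box l u)" using bl by (simp add: emeasure_eq_measure2)
  also have "\<dots> = emeasure lborel (box l u)" by simp
  moreover have "(\<lambda>x. U *v x) \<in> borel_measurable borel"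
    by (intro borel_measurable_continuous_onI linear_continuous_on matrix_vector_mul_bounded_linear)
  ultimately show "emeasure (distr lborel borel (\<lambda>x. U *v x)) (box l u) = (\<Prod>b\<in>Basis. (u - l) \<bullet> b)"
    using le by (simp add: emeasure_distr pre emeasure_lborel_box_eq)
qed simp

typedef 'a wo = "UNIV :: 'a set" by auto

lemma Rep_wo_range: "range Rep_wo = UNIV"
  using type_definition.Rep_range[OF type_definition_wo] by simp
lemma bij_Rep_wo: "bij Rep_wo"
  by (metis Rep_wo_inject Rep_wo_range bij_betw_def injI)

instance wo :: (finite) finite
proof
  have "(UNIV :: 'a wo set) = Abs_wo ` UNIV"
    by (metis Rep_wo_inverse UNIV_eq_I rangeI)
  then show "finite (UNIV :: 'a wo set)" by (metis finite finite_imageI)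
qed

instantiation wo :: (linorder) linorder
begin
definition less_eq_wo :: "'a wo \<Rightarrow> 'a wo \<Rightarrow> bool" where "less_eq_wo x y \<longleftrightarrow> Rep_wo x \<le> Rep_wo y"
definition less_wo :: "'a wo \<Rightarrow> 'a wo \<Rightarrow> bool" where "less_wo x y \<longleftrightarrow> Rep_wo x < Rep_wo y"
instance
  by standard (auto simp: less_eq_wo_def less_wo_def Rep_wo_inject order.strict_iff_order)
end

instance wo :: ("{finite,linorder}") wellorder
proof
  fix P :: "'a wo \<Rightarrow> bool" and a
  assume step: "\<And>x. (\<And>y. y < x \<Longrightarrow> P y) \<Longrightarrow> P x"
  let ?f = "\<lambda>x::'a wo. card {y. y < x}"
  have lt: "?f y < ?f x" if "y < x" for x y
    by (rule psubset_card_mono) (use that in auto)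
  have "wf (inv_image less_than ?f)" by simp
  then have wf: "wf {(y, x). y < (x::'a wo)}"
    by (rule wf_subset) (auto intro: lt)
  show "P a"
    by (induct a rule: wf_induct[OF wf]) (auto intro: step)
qed

lemma prod_Basis_cart: "(\<Prod>b\<in>Basis. (x::real^'n) \<bullet> b) = (\<Prod>i\<in>UNIV. x $ i)"
  by (simp add: Basis_vec_def cart_eq_inner_axis axis_eq_axis prod.UNION_disjoint)

lemma le_Basis_cart: "(\<forall>b\<in>Basis. (l::real^'n) \<bullet> b \<le> u \<bullet> b) \<longleftrightarrow> (\<forall>i. l $ i \<le> u $ i)"
  by (auto simp: Basis_vec_def cart_eq_inner_axis)

definition Tw :: "real^'n \<Rightarrow> real^('n wo)" where "Tw x = (\<chi> j. x $ Rep_wo j)"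
definition Tiw :: "real^('n wo) \<Rightarrow> real^'n" where "Tiw y = (\<chi> i. y $ Abs_wo i)"

lemma Tiw_Tw[simp]: "Tiw (Tw x) = x" by (simp add: Tw_def Tiw_def Abs_wo_inverse vec_eq_iff)
lemma Tw_Tiw[simp]: "Tw (Tiw y) = y" by (simp add: Tw_def Tiw_def Rep_wo_inverse vec_eq_iff)

lemma Tw_meas[measurable]: "Tw \<in> borel_measurable borel"
proof -
  have "linear Tw" by (auto simp: linear_iff Tw_def vec_eq_iff)
  then show ?thesis by (intro borel_measurable_continuous_onI linear_continuous_on linear_conv_bounded_linear[THEN iffD1])
qed
lemma Tiw_meas[measurable]: "Tiw \<in> borel_measurable borel"
proof -
  have "linear Tiw" by (auto simp: linear_iff Tiw_def vec_eq_iff)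
  then show ?thesis by (intro borel_measurable_continuous_onI linear_continuous_on linear_conv_bounded_linear[THEN iffD1])
qed

lemma lborel_Tw: "distr lborel borel Tw = (lborel :: (real^('n::finite wo)) measure)"
proof (rule lborel_eqI[symmetric])
  fix l u :: "real^('n::finite wo)"
  assume le: "\<And>b. b \<in> Basis \<Longrightarrow> l \<bullet> b \<le> u \<bullet> b"
  then have le': "\<forall>i. l $ i \<le> u $ i" using le_Basis_cart by blast
  have pre: "Tw -` box l u = box (Tiw l) (Tiw u)"
    apply (auto simp: mem_box_cart Tw_def Tiw_def Abs_wo_inverse)
    by (metis Abs_wo_inverse Rep_wo_inverse UNIV_I)+
  have "emeasure lborel (box (Tiw l) (Tiw u)) = (\<Prod>i\<in>UNIV. u $ Abs_wo i - l $ Abs_wo i)"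
    using le' by (simp add: emeasure_lborel_box_eq le_Basis_cart prod_Basis_cart Tiw_def)
  also have "\<dots> = (\<Prod>j\<in>UNIV. u $ j - l $ j)"
  proof -
    have "bij (Abs_wo :: 'n \<Rightarrow> 'n wo)"
      by (metis Abs_wo_inverse Rep_wo_inverse UNIV_I bij_betw_byWitness subsetI)
    then show ?thesis using prod.reindex_bij_betw[of Abs_wo UNIV UNIV "\<lambda>j. u $ j - l $ j"] by simp
  qed
  finally show "emeasure (distr lborel borel Tw) (box l u) = (\<Prod>b\<in>Basis. (u - l) \<bullet> b)"
    by (simp add: emeasure_distr pre prod_Basis_cart)
qed simp

lemma lborel_Tiw: "distr lborel borel Tiw = (lborel :: (real^('n::finite)) measure)"
proof -
  have "distr lborel borel Tiw = distr (distr lborel borel Tw) borel Tiw"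
    by (simp add: lborel_Tw)
  also have "\<dots> = distr lborel borel (\<lambda>x. Tiw (Tw x))"
    by (simp add: distr_distr comp_def)
  also have "\<dots> = lborel" using distr_id2[of borel lborel] by simp
  finally show ?thesis by simp
qed

lemma sum_Rep_wo: "(\<Sum>m\<in>UNIV. f (Rep_wo m)) = (\<Sum>i\<in>UNIV. f i)"
  using sum.reindex_bij_betw[of Rep_wo UNIV UNIV f] bij_Rep_wo by simp

lemma lborel_orth:
  fixes U :: "real^('n::{finite,linorder})^('n::{finite,linorder})"
  assumes U: "orthogonal_matrix U"
  shows "distr lborel borel (\<lambda>x. U *v x) = lborel"
proof -
  define U' :: "real^('n wo)^('n wo)" where "U' = (\<chi> j k. U $ Rep_wo j $ Rep_wo k)"
  have eq: "U *v Tiw y = Tiw (U' *v y)" for y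
  proof -
    have "(U *v Tiw y) $ i = Tiw (U' *v y) $ i" for i
    proof -
      have "Tiw (U' *v y) $ i = (\<Sum>m\<in>UNIV. U $ i $ Rep_wo m * y $ Abs_wo (Rep_wo m))"
        by (simp add: Tiw_def U'_def matrix_vector_mult_def Abs_wo_inverse Rep_wo_inverse)
      also have "\<dots> = (\<Sum>k\<in>UNIV. U $ i $ k * y $ Abs_wo k)"
        by (rule sum_Rep_wo)
      finally show ?thesis by (simp add: Tiw_def matrix_vector_mult_def)
    qed
    then show ?thesis by (simp add: vec_eq_iff)
  qed
  have "transpose U' ** U' = mat 1"
  proof -
    have tu: "transpose U ** U = mat 1" using U by (simp add: orthogonal_matrix_def)
    have "(transpose U' ** U') $ j $ k = mat 1 $ j $ k" for j k
    proof -
      have "(transpose U' ** U') $ j $ k = (\<Sum>m\<in>UNIV. U $ Rep_wo m $ Rep_wo j * U $ Rep_wo m $ Rep_wo k)"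
        by (simp add: U'_def matrix_matrix_mult_def transpose_def)
      also have "\<dots> = (\<Sum>i\<in>UNIV. U $ i $ Rep_wo j * U $ i $ Rep_wo k)"
        by (rule sum_Rep_wo)
      also have "\<dots> = (transpose U ** U) $ Rep_wo j $ Rep_wo k"
        by (simp add: matrix_matrix_mult_def transpose_def)
      also have "\<dots> = mat 1 $ j $ k" by (simp add: tu mat_def Rep_wo_inject)
      finally show ?thesis .
    qed
    then show ?thesis by (simp add: vec_eq_iff)
  qed
  then have oU': "orthogonal_matrix U'" by (simp add: orthogonal_matrix)
  have mU: "(\<lambda>x. U *v x) \<in> borel_measurable borel"
    by (intro borel_measurable_continuous_onI linear_continuous_on matrix_vector_mul_bounded_linear)
  have mU': "(\<lambda>x. U' *v x) \<in> borel_measurable borel"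
    by (intro borel_measurable_continuous_onI linear_continuous_on matrix_vector_mul_bounded_linear)
  have "distr lborel borel (\<lambda>x. U *v x) = distr (distr lborel borel Tiw) borel (\<lambda>x. U *v x)"
    by (simp add: lborel_Tiw)
  also have "\<dots> = distr lborel borel (\<lambda>y. U *v Tiw y)"
    using mU by (simp add: distr_distr comp_def)
  also have "\<dots> = distr lborel borel (\<lambda>y. Tiw (U' *v y))" by (simp add: eq)
  also have "\<dots> = distr (distr lborel borel (\<lambda>y. U' *v y)) borel Tiw"
    using mU' by (simp add: distr_distr comp_def)
  also have "\<dots> = lborel" by (simp add: lborel_orth_wo[OF oU'] lborel_Tiw)
  finally show ?thesis .
qed

lemma lin_repr:
  fixes D :: "real^'n \<Rightarrow> real"
  assumes "linear D"
  shows "D = (\<lambda>h. (\<chi> i. D (axis i 1)) \<bullet> h)"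
proof
  fix h :: "real^'n"
  have "D h = D (\<Sum>i\<in>UNIV. h $ i *\<^sub>R axis i 1)"
    by (metis basis_expansion scalar_mult_eq_scaleR)
  also have "\<dots> = (\<Sum>i\<in>UNIV. h $ i * D (axis i 1))"
    using assms by (simp add: linear_sum linear_scale)
  also have "\<dots> = (\<chi> i. D (axis i 1)) \<bullet> h"
    by (simp add: inner_vec_def mult.commute)
  finally show "D h = (\<chi> i. D (axis i 1)) \<bullet> h" .
qed

lemma grad_ex:
  fixes g :: "real^'n \<Rightarrow> real"
  assumes "g differentiable (at z)"
  shows "(g has_derivative (\<lambda>h. gradient g z \<bullet> h)) (at z)"
proof -
  obtain D where D: "(g has_derivative D) (at z)" using assms differentiable_def by blast
  then have "linear D" using has_derivative_linear by blast
  then have "D = (\<lambda>h. (\<chi> i. D (axis i 1)) \<bullet> h)" by (rule lin_repr)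
  with D have "\<exists>v. (g has_derivative (\<lambda>h. v \<bullet> h)) (at z)" by metis
  then show ?thesis unfolding gradient_def by (rule someI_ex)
qed

lemma grad_unique:
  fixes g :: "real^'n \<Rightarrow> real"
  assumes "(g has_derivative (\<lambda>h. v \<bullet> h)) (at z)"
  shows "gradient g z = v"
proof -
  have "g differentiable (at z)" using assms differentiable_def by blast
  then have "(\<lambda>h. gradient g z \<bullet> h) = (\<lambda>h. v \<bullet> h)"
    using grad_ex assms has_derivative_unique by blast
  then have "\<And>i. gradient g z \<bullet> axis i 1 = v \<bullet> axis i 1" by metis
  then show ?thesis by (simp add: vec_eq_iff inner_axis)
qed

lemma has_derivative_mv: "((\<lambda>x. (A::real^'n^'m) *v x) has_derivative (\<lambda>x. A *v x)) F"
  by (intro bounded_linear_imp_has_derivative matrix_vector_mul_bounded_linear)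

lemma diff_lin:
  fixes g :: "real^'n \<Rightarrow> real"
  assumes "g differentiable (at (A *v z))"
  shows "(\<lambda>x. g (A *v x)) differentiable (at z)"
proof -
  obtain D where D: "(g has_derivative D) (at (A *v z))" using assms differentiable_def by blast
  have "((\<lambda>x. g (A *v x)) has_derivative (\<lambda>x. D (A *v x))) (at z)"
    by (rule has_derivative_compose[OF has_derivative_mv D])
  then show ?thesis using differentiable_def by blast
qed

lemma grad_comp:
  fixes g :: "real^'n \<Rightarrow> real"
  assumes "g differentiable (at (A *v z))"
  shows "gradient (\<lambda>x. g (A *v x)) z = transpose A *v gradient g (A *v z)"
proof (rule grad_unique)
  have "((\<lambda>x. g (A *v x)) has_derivative (\<lambda>x. gradient g (A *v z) \<bullet> (A *v x))) (at z)"
    by (rule has_derivative_compose[OF has_derivative_mv grad_ex[OF assms]])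
  moreover have "(\<lambda>x. gradient g (A *v z) \<bullet> (A *v x)) = (\<lambda>x. (transpose A *v gradient g (A *v z)) \<bullet> x)"
    by (simp add: transpose_matrix_vector dot_lmul_matrix)
  ultimately show "((\<lambda>x. g (A *v x)) has_derivative (\<lambda>x. (transpose A *v gradient g (A *v z)) \<bullet> x)) (at z)"
    by simp
qed

lemma phi_eq:
  "(\<Prod>i\<in>UNIV. std_normal_density ((z::real^'n) $ i)) = (1 / sqrt (2*pi)) ^ CARD('n) * exp (- (norm z ^ 2) / 2)"
proof -
  have "(\<Prod>i\<in>UNIV. std_normal_density (z $ i)) = (\<Prod>i\<in>UNIV. (1 / sqrt (2*pi)) * exp (- ((z $ i) ^ 2) / 2))"
    by (simp add: std_normal_density_def)
  also have "\<dots> = (1 / sqrt (2*pi)) ^ CARD('n) * exp (\<Sum>i\<in>UNIV. - ((z $ i) ^ 2) / 2)"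
    by (subst prod.distrib) (simp add: exp_sum)
  also have "(\<Sum>i\<in>UNIV. - ((z $ i) ^ 2) / 2) = - (norm z ^ 2) / 2"
  proof -
    have "norm z ^ 2 = (\<Sum>i\<in>UNIV. (z $ i) ^ 2)"
      unfolding power2_norm_eq_inner by (simp add: inner_vec_def power2_eq_square)
    then show ?thesis by (simp add: sum_divide_distrib[symmetric] sum_negf)
  qed
  finally show ?thesis .
qed

lemma norm_orth: "orthogonal_matrix U \<Longrightarrow> norm (U *v x) = norm (x::real^'n)"
  using orth_tr orthogonal_transformation_norm by blast

lemma gauss_inv:
  fixes U :: "real^('n::{finite,linorder})^('n::{finite,linorder})"
  assumes U: "orthogonal_matrix U"
  shows "distr std_gaussian std_gaussian (\<lambda>x. U *v x) = std_gaussian"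
proof -
  define phi :: "real^('n::{finite,linorder}) \<Rightarrow> ennreal" where "phi = (\<lambda>z. ennreal (\<Prod>i\<in>UNIV. std_normal_density (z $ i)))"
  have mphi[measurable]: "phi \<in> borel_measurable borel" unfolding phi_def by measurable
  have mU[measurable]: "(\<lambda>x. U *v x) \<in> borel_measurable borel"
    by (intro borel_measurable_continuous_onI linear_continuous_on matrix_vector_mul_bounded_linear)
  have inv: "phi (U *v x) = phi x" for x
    unfolding phi_def phi_eq using norm_orth[OF U] by simp
  have sg: "std_gaussian = density lborel phi" by (simp add: std_gaussian_def phi_def)
  have "density lborel phi = density (distr lborel borel (\<lambda>x. U *v x)) phi"
    by (simp add: lborel_orth[OF U])
  also have "\<dots> = distr (density lborel (\<lambda>x. phi (U *v x))) borel (\<lambda>x. U *v x)"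
    by (rule density_distr) simp_all
  also have "\<dots> = distr (density lborel phi) borel (\<lambda>x. U *v x)"
    by (simp add: inv)
  finally have "distr (density lborel phi) borel (\<lambda>x. U *v x) = density lborel phi" by simp
  moreover have "distr (density lborel phi) (density lborel phi) (\<lambda>x. U *v x) = distr (density lborel phi) borel (\<lambda>x. U *v x)"
    by (rule distr_cong) auto
  ultimately show ?thesis using sg by simp
qed

lemma sets_sg: "sets std_gaussian = sets borel"
  unfolding std_gaussian_def by simp

lemma mv_meas_sg:
  "(\<lambda>x. (U::real^'n^'n) *v x) \<in> measurable std_gaussian std_gaussian"
proof -
  have "(\<lambda>x. U *v x) \<in> borel_measurable borel"
    by (intro borel_measurable_continuous_onI linear_continuous_on matrix_vector_mul_bounded_linear)
  then show ?thesis using measurable_cong_sets[OF sets_sg sets_sg] by blast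
qed

lemma gauss_integral_inv:
  fixes U :: "real^('n::{finite,linorder})^('n::{finite,linorder})"
  assumes U: "orthogonal_matrix U" and h: "h \<in> borel_measurable std_gaussian"
  shows "integral\<^sup>L std_gaussian (\<lambda>z. h (U *v z)) = (integral\<^sup>L std_gaussian h :: real)"
proof -
  have "integral\<^sup>L std_gaussian h = integral\<^sup>L (distr std_gaussian std_gaussian (\<lambda>x. U *v x)) h"
    by (simp add: gauss_inv[OF U])
  also have "\<dots> = integral\<^sup>L std_gaussian (\<lambda>z. h (U *v z))"
    by (rule integral_distr[OF mv_meas_sg h])
  finally show ?thesis by simp
qed

lemma gauss_integrable_inv:
  fixes U :: "real^('n::{finite,linorder})^('n::{finite,linorder})"
  assumes U: "orthogonal_matrix U" and h: "integrable std_gaussian (h :: _ \<Rightarrow> real)"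
  shows "integrable std_gaussian (\<lambda>z. h (U *v z))"
proof -
  have hm: "h \<in> borel_measurable std_gaussian" using h by (rule borel_measurable_integrable)
  have "integrable (distr std_gaussian std_gaussian (\<lambda>x. U *v x)) h"
    by (simp add: gauss_inv[OF U] h)
  then show ?thesis using integrable_distr_eq[OF mv_meas_sg hm] by simp
qed

lemma quad_entry:
  "(transpose U ** C ** U) $ i $ j = (\<Sum>k\<in>UNIV. \<Sum>l\<in>UNIV. (U$k$i * U$l$j) * C$k$l :: real)"
proof -
  have "(transpose U ** C ** U) $ i $ j = (\<Sum>l\<in>UNIV. (\<Sum>k\<in>UNIV. U$k$i * C$k$l) * U$l$j)"
    by (simp add: matrix_matrix_mult_def transpose_def)
  also have "\<dots> = (\<Sum>l\<in>UNIV. \<Sum>k\<in>UNIV. (U$k$i * U$l$j) * C$k$l)"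
    by (intro sum.cong refl) (simp add: sum_distrib_left sum_distrib_right mult_ac)
  also have "\<dots> = (\<Sum>k\<in>UNIV. \<Sum>l\<in>UNIV. (U$k$i * U$l$j) * C$k$l)"
    by (rule sum.swap)
  finally show ?thesis .
qed

lemma column_mult: "column i (A ** B) = A *v column i B"
  unfolding vec_eq_iff by (simp add: column_def matrix_matrix_mult_def matrix_vector_mult_def mult.commute)

theorem corollary3p4:
  fixes Sigma R1 R2 :: "real^('n::{finite,linorder})^('n::{finite,linorder})"
    and f :: "real^('n::{finite,linorder}) \<Rightarrow> real"
  assumes "pos_def Sigma"
    and "R1 ** transpose R1 = Sigma" and "R2 ** transpose R2 = Sigma"
    and "grad_info_finite (\<lambda>z. f (R1 *v z))"
    and "grad_info_finite (\<lambda>z. f (R2 *v z))"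
  shows "let g1 = (\<lambda>z. f (R1 *v z)); g2 = (\<lambda>z. f (R2 *v z)); U = matrix_inv R1 ** R2 in
           orthogonal_matrix U \<and>
           (\<forall>Q lam. eig_decomp_desc (grad_info g1) Q lam \<longleftrightarrow>
                    eig_decomp_desc (grad_info g2) (transpose U ** Q) lam) \<and>
           (\<forall>Q lam r. eig_decomp_desc (grad_info g1) Q lam \<longrightarrow>
                    (\<lambda>x. transpose U *v x) ` active_subspace Q r = active_subspace (transpose U ** Q) r) \<and>
           (\<forall>Q lam. eig_decomp_desc (grad_info g1) Q lam \<longrightarrow>
                    active_fun g1 Q = active_fun g2 (transpose U ** Q))"
proof -
  define g1 where "g1 = (\<lambda>z. f (R1 *v z))"
  define g2 where "g2 = (\<lambda>z. f (R2 *v z))"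
  define Ri where "Ri = matrix_inv R1"
  define U where "U = Ri ** R2"
  have inj: "\<forall>x. transpose R1 *v x = 0 \<longrightarrow> x = 0"
  proof (intro allI impI)
    fix x assume x0: "transpose R1 *v x = 0"
    have "Sigma *v x = R1 *v (transpose R1 *v x)"
      using assms(2) by (simp add: matrix_vector_mul_assoc)
    also have "\<dots> = 0" using x0 by simp
    finally have "x \<bullet> (Sigma *v x) = 0" by simp
    then show "x = 0" using assms(1) unfolding pos_def_def by force
  qed
  then obtain B where "B ** transpose R1 = mat 1" using matrix_left_invertible_ker by blast
  then obtain B' where "R1 ** B' = mat 1" using left_invertible_transpose by blast
  then have "invertible R1"
    unfolding invertible_def using matrix_left_right_inverse by blast
  then have Ri: "R1 ** Ri = mat 1" "Ri ** R1 = mat 1"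
    unfolding Ri_def matrix_inv_def invertible_def by (metis (mono_tags, lifting) someI_ex)+
  have R2eq: "R2 = R1 ** U"
    by (simp add: U_def matrix_mul_assoc Ri)
  have UUt: "U ** transpose U = mat 1"
  proof -
    have "R1 ** (U ** transpose U) ** transpose R1 = R1 ** transpose R1"
      using assms(2,3) R2eq by (simp add: matrix_transpose_mul matrix_mul_assoc)
    then have "Ri ** (R1 ** (U ** transpose U) ** transpose R1) ** transpose Ri = Ri ** (R1 ** transpose R1) ** transpose Ri"
      by simp
    moreover have "transpose R1 ** transpose Ri = mat 1"
      using Ri by (metis matrix_transpose_mul transpose_mat)
    ultimately show ?thesis
      by (simp add: matrix_mul_assoc Ri) (simp add: matrix_mul_assoc[symmetric] Ri)
  qed
  then have UtU: "transpose U ** U = mat 1" using matrix_left_right_inverse by blast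
  have oU: "orthogonal_matrix U" using UUt UtU by (simp add: orthogonal_matrix_def)
  have g2eq: "g2 = (\<lambda>z. g1 (U *v z))"
    by (simp add: g1_def g2_def R2eq matrix_vector_mul_assoc)
  have g1eq: "g1 = (\<lambda>x. g2 (transpose U *v x))"
    by (simp add: g2eq matrix_vector_mul_assoc UUt)
  have ae2: "AE z in std_gaussian. g2 differentiable (at z)"
    using assms(5) unfolding grad_info_finite_def g2_def by blast
  have int2: "integrable std_gaussian (\<lambda>z. gradient g2 z $ i * gradient g2 z $ j)" for i j
    using assms(5) unfolding grad_info_finite_def g2_def by blast
  have int1: "integrable std_gaussian (\<lambda>z. gradient g1 z $ k * gradient g1 z $ l)" for k l
    using assms(4) unfolding grad_info_finite_def g1_def by blast
  have gpt: "gradient g2 z = transpose U *v gradient g1 (U *v z)" if d: "g2 differentiable (at z)" for z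
  proof -
    have "g2 differentiable (at (transpose U *v (U *v z)))"
      using d by (simp add: matrix_vector_mul_assoc UtU)
    then have "(\<lambda>x. g2 (transpose U *v x)) differentiable (at (U *v z))"
      by (rule diff_lin)
    then have "g1 differentiable (at (U *v z))" using g1eq by simp
    from grad_comp[OF this] show ?thesis using g2eq by simp
  qed
  have AEg: "AE z in std_gaussian. gradient g2 z = transpose U *v gradient g1 (U *v z)"
    using ae2 by (rule eventually_mono) (rule gpt)
  have C2: "grad_info g2 = transpose U ** grad_info g1 ** U"
  proof -
    have "grad_info g2 $ i $ j = (transpose U ** grad_info g1 ** U) $ i $ j" for i j
    proof -
      define F where "F = (\<lambda>z. \<Sum>k\<in>UNIV. \<Sum>l\<in>UNIV. (U$k$i * U$l$j) *
           (gradient g1 (U *v z) $ k * gradient g1 (U *v z) $ l))"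
      have intU: "integrable std_gaussian (\<lambda>z. gradient g1 (U *v z) $ k * gradient g1 (U *v z) $ l)" for k l
        using gauss_integrable_inv[OF oU int1[of k l]] by simp
      have intF: "integrable std_gaussian F"
        unfolding F_def by (simp add: intU)
      have eqAE: "AE z in std_gaussian. gradient g2 z $ i * gradient g2 z $ j = F z"
        using AEg
      proof (rule eventually_mono)
        fix z assume eq: "gradient g2 z = transpose U *v gradient g1 (U *v z)"
        have c: "(transpose U *v v) $ m = (\<Sum>k\<in>UNIV. U$k$m * v$k)" for v :: "real^('n::{finite,linorder})" and m
          by (simp add: matrix_vector_mult_def transpose_def)
        show "gradient g2 z $ i * gradient g2 z $ j = F z"
          unfolding eq c F_def sum_product by (simp add: mult_ac)
      qed
      have "grad_info g2 $ i $ j = integral\<^sup>L std_gaussian (\<lambda>z. gradient g2 z $ i * gradient g2 z $ j)"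
        by (simp add: grad_info_def)
      also have "\<dots> = integral\<^sup>L std_gaussian F"
        using int2[of i j] intF eqAE by (intro integral_cong_AE) auto
      also have "\<dots> = (\<Sum>k\<in>UNIV. \<Sum>l\<in>UNIV. (U$k$i * U$l$j) *
           integral\<^sup>L std_gaussian (\<lambda>z. gradient g1 (U *v z) $ k * gradient g1 (U *v z) $ l))"
        unfolding F_def
        by (simp add: integral_sum intU)
      also have "\<dots> = (\<Sum>k\<in>UNIV. \<Sum>l\<in>UNIV. (U$k$i * U$l$j) * grad_info g1 $ k $ l)"
        using gauss_integral_inv[OF oU borel_measurable_integrable[OF int1]]
        by (simp add: grad_info_def)
      also have "\<dots> = (transpose U ** grad_info g1 ** U) $ i $ j"
        by (rule quad_entry[symmetric])
      finally show ?thesis .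
    qed
    then show ?thesis by (simp add: vec_eq_iff)
  qed
  have XUUt: "X ** U ** transpose U = X" for X :: "real^('n::{finite,linorder})^('n::{finite,linorder})"
    by (simp add: matrix_mul_assoc[symmetric] UUt)
  have XUtU: "X ** transpose U ** U = X" for X :: "real^('n::{finite,linorder})^('n::{finite,linorder})"
    by (simp add: matrix_mul_assoc[symmetric] UtU)
  have oUt: "orthogonal_matrix (transpose U)" using oU by simp
  have P1: "eig_decomp_desc (grad_info g1) Q lam \<longleftrightarrow>
            eig_decomp_desc (grad_info g2) (transpose U ** Q) lam" for Q lam
  proof
    assume e: "eig_decomp_desc (grad_info g1) Q lam"
    then have oQ: "orthogonal_matrix Q" and c1: "grad_info g1 = Q ** diag_mat lam ** transpose Q"
      and o: "\<forall>i j. i \<le> j \<longrightarrow> lam $ j \<le> lam $ i"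
      unfolding eig_decomp_desc_def by auto
    have "orthogonal_matrix (transpose U ** Q)" by (rule orthogonal_matrix_mul[OF oUt oQ])
    moreover have "grad_info g2 = (transpose U ** Q) ** diag_mat lam ** transpose (transpose U ** Q)"
      by (simp add: C2 c1 matrix_transpose_mul matrix_mul_assoc)
    ultimately show "eig_decomp_desc (grad_info g2) (transpose U ** Q) lam"
      using o unfolding eig_decomp_desc_def by auto
  next
    assume e: "eig_decomp_desc (grad_info g2) (transpose U ** Q) lam"
    then have oQ: "orthogonal_matrix (transpose U ** Q)"
      and c2: "grad_info g2 = (transpose U ** Q) ** diag_mat lam ** transpose (transpose U ** Q)"
      and o: "\<forall>i j. i \<le> j \<longrightarrow> lam $ j \<le> lam $ i"
      unfolding eig_decomp_desc_def by auto
    have "orthogonal_matrix (U ** (transpose U ** Q))" by (rule orthogonal_matrix_mul[OF oU oQ])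
    then have "orthogonal_matrix Q" by (simp add: matrix_mul_assoc UUt)
    moreover have "grad_info g1 = U ** grad_info g2 ** transpose U"
      by (simp add: C2 matrix_mul_assoc UUt XUUt)
    then have "grad_info g1 = Q ** diag_mat lam ** transpose Q"
      by (simp add: c2 matrix_transpose_mul matrix_mul_assoc UUt XUUt)
    ultimately show "eig_decomp_desc (grad_info g1) Q lam"
      using o unfolding eig_decomp_desc_def by auto
  qed
  have P2: "(\<lambda>x. transpose U *v x) ` active_subspace Q r = active_subspace (transpose U ** Q) r" for Q r
  proof -
    have lin: "linear (\<lambda>x. transpose U *v x)" by (rule matrix_vector_mul_linear)
    have img: "(\<lambda>x. transpose U *v x) ` {column i Q | i. card {j. j < i} < r} =
               {column i (transpose U ** Q) | i. card {j. j < i} < r}"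
      by (auto simp: column_mult)
    show ?thesis unfolding active_subspace_def
      using span_linear_image[OF lin, of "{column i Q | i. card {j. j < i} < r}"] img by simp
  qed
  have P3: "active_fun g1 Q = active_fun g2 (transpose U ** Q)" for Q
    by (rule ext) (simp add: active_fun_def g2eq matrix_vector_mul_assoc matrix_mul_assoc UUt)
  show ?thesis
    unfolding Let_def g1_def[symmetric] g2_def[symmetric] Ri_def[symmetric] U_def[symmetric]
    using oU P1 P2 P3 by blast
qed

end
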